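(* Let $F_{\mathcal P}$ be a function determined by Algorithm 1 for a path $\mathcal P$, where the arbitrary phases assigned to class representatives are chosen so that $F_{\mathcal P}(\vec i)=\overline{F_{\mathcal P}(\vec i\oplus\vec\alpha^{\mathcal P})}$ for every class representative $\vec i$. Then $F_{\mathcal P}(\vec i\oplus\vec\alpha^{\mathcal P})=\overline{F_{\mathcal P}(\vec i)}$ for every configuration $\vec i$ on $\mathrm{Conn}(\mathcal P)$.
   Context: Let $\Lambda$ be a hexagonal (honeycomb) lattice embedded in a closed orientable surface, with one qubit on each edge. For an edge $j$, $\sigma^x_j,\sigma^z_j$ denote the Pauli operators on qubit $j$ and $n^{\pm}_j=\tfrac12(1\pm\sigma^z_j)$. A (string) configuration $\vec i$ is a computational basis state, viewed as a bit string assigning $0$ (empty) or $1$ (occupied) to each edge; $\vec i\oplus\vec\alpha$ is bitwise addition mod 2. For a hexagonal plaquette $p$, label its boundary edges $1,\dots,6$ cyclically (index $0$ means $6$) and its outgoing edges so that edge $12$ meets edges $6,1$; edge $7$ meets $1,2$; edge $8$ meets $2,3$; edge $9$ meets $3,4$; edge $10$ meets $4,5$; edge $11$ meets $5,6$. Define $B_p=\Big(\prod_{j=1}^6\sigma^x_j\Big)\Big(\prod_{j=1}^6(-1)^{n^-_{j-1}n^+_j}\Big)\,i^{n^-_{12}(n^-_1n^-_6-n^+_1n^+_6)}\,i^{n^-_7(n^+_1n^+_2-n^-_1n^-_2)}\,i^{n^+_8(n^-_2n^+_3-n^+_2n^-_3)}\,i^{n^-_9(n^-_3n^-_4-n^+_3n^+_4)}\,i^{n^-_{10}(n^+_4n^+_5-n^-_4n^-_5)}\,i^{n^+_{11}(n^-_5n^+_6-n^+_5n^-_6)}$;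 all $B_p$ commute pairwise and square to the identity. Write $B_p=\prod_{j\in\partial p}\sigma^x_j\sum_{\vec i}b_p(\vec i)|\vec i\rangle\langle\vec i|$, defining the phase $b_p(\vec i)$. Let $\vec\alpha^p$ be the configuration occupied exactly on the boundary edges of $p$. A path $\mathcal P$ is a sequence of edges forming a walk; $\vec\alpha^{\mathcal P}$ is the mod-2 sum of the indicators of its edges. $\mathrm{Conn}(\mathcal P)$ is the set of edges of $\mathcal P$ together with all edges sharing a vertex with an edge of $\mathcal P$; $\mathcal B_{\mathcal P}$ is the set of plaquettes with at least one boundary edge in $\mathrm{Conn}(\mathcal P)$. Define $\theta_{\mathcal P}(\vec i,p_1,\dots,p_m)=\prod_{k=1}^m \frac{b_{p_k}(\vec i\oplus\vec\alpha^{\mathcal P}\oplus\bigoplus_{j<k}\vec\alpha^{p_j})}{b_{p_k}(\vec i\oplus\bigoplus_{j<k}\vec\alpha^{p_j})}$ (a configuration on $\mathrm{Conn}(\mathcal P)$ being extended arbitrarily to the whole lattice). The configuration class of $\vec i$ on $\mathrm{Conn}(\mathcal P)$ is $\mathcal C_{\mathcal P}(\vec i)=\{\vec i\oplus\bigoplus_{p\in S}\vec\alpha^p|_{\mathrm{Conn}(\mathcal P)}:S\subseteq\mathcal B_{\mathcal P}\}$. Algorithm 1: for each configuration class pick a representative $\vec i$, set $F_{\mathcal P}(\vec i)$ to an arbitrary unit complex number, and for every subset $\{p_1,\dots,p_m\}\subseteq\mathcal B_{\mathcal P}$ set $F_{\mathcal P}(\vec i\oplus\bigoplus_k\vec\alpha^{p_k})=\theta_{\mathcal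 P}(\vec i,p_1,\dots,p_m)F_{\mathcal P}(\vec i)$. *)

theory Defs
  imports Complex_Main
begin

text \<open>Configurations are sets of occupied edges; bitwise addition mod 2 is symmetric difference.\<close>

definition cfg_xor :: "'e set \<Rightarrow> 'e set \<Rightarrow> 'e set" where
  "cfg_xor A B = (A - B) \<union> (B - A)"

definition cfg_sum :: "'e set list \<Rightarrow> 'e set" where
  "cfg_sum xs = foldr cfg_xor xs {}"

text \<open>Cyclic predecessor on boundary labels 1..6 (index 0 means 6).\<close>
definition prv :: "nat \<Rightarrow> nat" where
  "prv k = (if k = 1 then 6 else k - 1)"

text \<open>Combinatorial honeycomb lattice embedded in a closed orientable surface.
  ends e: the two endpoints of edge e; Pl: the plaquettes; lab p k: the edge of p with label k
  (1..6 boundary edges in cyclic order, 7..12 outgoing edges).  crn p k is the corner of p shared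
  by boundary edges k and k+1 (mod 6); outgoing edge 6+k meets edges k and k+1 there.
  Every vertex has degree 3, every edge lies on the boundary of exactly two plaquettes, and the
  cyclic orderings of the plaquettes are consistently oriented (each edge is traversed in opposite
  directions by its two plaquettes).\<close>
definition honeycomb_surface ::
  "('e \<Rightarrow> 'v set) \<Rightarrow> 'f set \<Rightarrow> ('f \<Rightarrow> nat \<Rightarrow> 'e) \<Rightarrow> bool" where
  "honeycomb_surface ends Pl lab \<longleftrightarrow>
     finite (UNIV :: 'e set) \<and> finite Pl \<and> Pl \<noteq> {} \<and>
     (\<forall>e. card (ends e) = 2) \<and>
     (\<forall>v \<in> (\<Union>e. ends e). card {e. v \<in> ends e} = 3) \<and>
     (\<forall>e. card {(p, k). p \<in> Pl \<and> k \<in> {1..6} \<and> lab p k = e} = 2) \<and>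
     (\<exists>crn :: 'f \<Rightarrow> nat \<Rightarrow> 'v.
        (\<forall>p \<in> Pl. inj_on (lab p) {1..12} \<and> inj_on (crn p) {1..6} \<and>
           (\<forall>k \<in> {1..6}. ends (lab p k) = {crn p (prv k), crn p k} \<and>
                           crn p k \<in> ends (lab p (k + 6)))) \<and>
        (\<forall>p \<in> Pl. \<forall>q \<in> Pl. \<forall>k \<in> {1..6}. \<forall>l \<in> {1..6}.
           lab p k = lab q l \<and> (p, k) \<noteq> (q, l) \<longrightarrow>
             crn p k = crn q (prv l) \<and> crn p (prv k) = crn q l))"

text \<open>The phase b_p(i) of the plaquette operator B_p (n^- = occupied, n^+ = empty).\<close>
definition bphase :: "('f \<Rightarrow> nat \<Rightarrow> 'e) \<Rightarrow> 'f \<Rightarrow> 'e set \<Rightarrow> complex" where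
  "bphase lab p x =
    (let nm = (\<lambda>k. if lab p k \<in> x then 1 else 0 :: int);
         np = (\<lambda>k. 1 - nm k)
     in (\<Prod>j\<in>{1..6::nat}. (-1) ^ nat (nm (prv j) * np j)) *
        \<i> powi (nm 12 * (nm 1 * nm 6 - np 1 * np 6)) *
        \<i> powi (nm 7 * (np 1 * np 2 - nm 1 * nm 2)) *
        \<i> powi (np 8 * (nm 2 * np 3 - np 2 * nm 3)) *
        \<i> powi (nm 9 * (nm 3 * nm 4 - np 3 * np 4)) *
        \<i> powi (nm 10 * (np 4 * np 5 - nm 4 * nm 5)) *
        \<i> powi (np 11 * (nm 5 * np 6 - np 5 * nm 6)))"

definition plaq_cfg :: "('f \<Rightarrow> nat \<Rightarrow> 'e) \<Rightarrow> 'f \<Rightarrow> 'e set" where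
  "plaq_cfg lab p = lab p ` {1..6}"

text \<open>B_p B_q = B_q B_p and B_p^2 = 1, expressed on the phases.\<close>
definition plaquettes_commute_square :: "'f set \<Rightarrow> ('f \<Rightarrow> nat \<Rightarrow> 'e) \<Rightarrow> bool" where
  "plaquettes_commute_square Pl lab \<longleftrightarrow>
    (\<forall>p \<in> Pl. \<forall>q \<in> Pl. \<forall>x.
       bphase lab p (cfg_xor x (plaq_cfg lab q)) * bphase lab q x =
       bphase lab q (cfg_xor x (plaq_cfg lab p)) * bphase lab p x) \<and>
    (\<forall>p \<in> Pl. \<forall>x. bphase lab p (cfg_xor x (plaq_cfg lab p)) * bphase lab p x = 1)"

definition is_path :: "('e \<Rightarrow> 'v set) \<Rightarrow> 'e list \<Rightarrow> bool" where
  "is_path ends P \<longleftrightarrow> P \<noteq> [] \<and>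
     (\<exists>vs. length vs = Suc (length P) \<and>
        (\<forall>k < length P. ends (P ! k) = {vs ! k, vs ! Suc k}))"

definition path_cfg :: "'e list \<Rightarrow> 'e set" where
  "path_cfg P = {e. odd (count_list P e)}"

definition Conn :: "('e \<Rightarrow> 'v set) \<Rightarrow> 'e list \<Rightarrow> 'e set" where
  "Conn ends P = set P \<union> {e. \<exists>f \<in> set P. ends e \<inter> ends f \<noteq> {}}"

definition BP :: "('e \<Rightarrow> 'v set) \<Rightarrow> 'f set \<Rightarrow> ('f \<Rightarrow> nat \<Rightarrow> 'e) \<Rightarrow> 'e list \<Rightarrow> 'f set" where
  "BP ends Pl lab P = {p \<in> Pl. plaq_cfg lab p \<inter> Conn ends P \<noteq> {}}"

text \<open>theta_P(i, p_1..p_m); a configuration on Conn(P) is extended by zeros to the whole lattice.\<close>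
definition theta :: "('f \<Rightarrow> nat \<Rightarrow> 'e) \<Rightarrow> 'e list \<Rightarrow> 'e set \<Rightarrow> 'f list \<Rightarrow> complex" where
  "theta lab P x ps =
     (\<Prod>k < length ps.
        bphase lab (ps ! k) (cfg_xor (cfg_xor x (path_cfg P)) (cfg_sum (map (plaq_cfg lab) (take k ps)))) /
        bphase lab (ps ! k) (cfg_xor x (cfg_sum (map (plaq_cfg lab) (take k ps)))))"

definition restr_sum :: "('e \<Rightarrow> 'v set) \<Rightarrow> ('f \<Rightarrow> nat \<Rightarrow> 'e) \<Rightarrow> 'e list \<Rightarrow> 'f list \<Rightarrow> 'e set" where
  "restr_sum ends lab P ps = cfg_sum (map (\<lambda>p. plaq_cfg lab p \<inter> Conn ends P) ps)"

definition config_class ::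
  "('e \<Rightarrow> 'v set) \<Rightarrow> 'f set \<Rightarrow> ('f \<Rightarrow> nat \<Rightarrow> 'e) \<Rightarrow> 'e list \<Rightarrow> 'e set \<Rightarrow> 'e set set" where
  "config_class ends Pl lab P x =
     {cfg_xor x (restr_sum ends lab P ps) | ps. distinct ps \<and> set ps \<subseteq> BP ends Pl lab P}"

text \<open>F is determined by Algorithm 1 with representative choice rep (rep x is the chosen
  representative of the class of x).\<close>
definition algorithm1 ::
  "('e \<Rightarrow> 'v set) \<Rightarrow> 'f set \<Rightarrow> ('f \<Rightarrow> nat \<Rightarrow> 'e) \<Rightarrow> 'e list \<Rightarrow>
   ('e set \<Rightarrow> 'e set) \<Rightarrow> ('e set \<Rightarrow> complex) \<Rightarrow> bool" where
  "algorithm1 ends Pl lab P rep F \<longleftrightarrow>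
     (\<forall>x. x \<subseteq> Conn ends P \<longrightarrow>
        rep x \<in> config_class ends Pl lab P x \<and>
        (\<forall>y \<in> config_class ends Pl lab P x. rep y = rep x) \<and>
        cmod (F (rep x)) = 1 \<and>
        (\<forall>ps. distinct ps \<and> set ps \<subseteq> BP ends Pl lab P \<longrightarrow>
           F (cfg_xor (rep x) (restr_sum ends lab P ps)) = theta lab P (rep x) ps * F (rep x)))"

end

theory Submission
  imports Defs "HOL-Library.Multiset"
begin


lemma xor_mem[simp]: "e \<in> cfg_xor A B \<longleftrightarrow> (e \<in> A) \<noteq> (e \<in> B)"
  by (auto simp: cfg_xor_def)
lemma xor_comm: "cfg_xor A B = cfg_xor B A" by (auto simp: set_eq_iff)
lemma xor_assoc: "cfg_xor (cfg_xor A B) C = cfg_xor A (cfg_xor B C)" by (auto simp: set_eq_iff)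
lemma xor_swap: "cfg_xor (cfg_xor A B) C = cfg_xor (cfg_xor A C) B" by (auto simp: set_eq_iff)
lemma xor_self[simp]: "cfg_xor A A = {}" by (auto simp: set_eq_iff)
lemma xor_empty[simp]: "cfg_xor A {} = A" "cfg_xor {} A = A" by (auto simp: set_eq_iff)
lemma xor_cancel[simp]: "cfg_xor (cfg_xor A B) B = A" by (auto simp: set_eq_iff)
lemma xor_cancel2[simp]: "cfg_xor A (cfg_xor A B) = B" by (auto simp: set_eq_iff)

lemma cfg_sum_Nil[simp]: "cfg_sum [] = {}" and cfg_sum_Cons[simp]: "cfg_sum (a#L) = cfg_xor a (cfg_sum L)"
  by (simp_all add: cfg_sum_def)
lemma cfg_sum_append: "cfg_sum (L @ M) = cfg_xor (cfg_sum L) (cfg_sum M)"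
  by (induction L) (auto simp: set_eq_iff)

lemma G_move:
  assumes swap: "\<And>x p q L. p \<in> D \<Longrightarrow> q \<in> D \<Longrightarrow> G x (p#q#L) = G x (q#p#L)"
    and cong: "\<And>x a M N. (\<And>y. G y M = G y N) \<Longrightarrow> G x (a#M) = G x (a#N)"
  shows "set A \<subseteq> D \<Longrightarrow> p \<in> D \<Longrightarrow> G x (A @ p # B) = G x (p # A @ B)"
proof (induction A arbitrary: x)
  case Nil then show ?case by simp
next
  case (Cons a A)
  have "G x (a # A @ p # B) = G x (a # p # A @ B)" using Cons by (intro cong) auto
  also have "\<dots> = G x (p # a # A @ B)" using Cons by (intro swap) auto
  finally show ?case by simp
qed

lemma G_perm:
  assumes swap: "\<And>x p q L. p \<in> D \<Longrightarrow> q \<in> D \<Longrightarrow> G x (p#q#L) = G x (q#p#L)"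
    and cong: "\<And>x a M N. (\<And>y. G y M = G y N) \<Longrightarrow> G x (a#M) = G x (a#N)"
  shows "mset L = mset L' \<Longrightarrow> set L \<subseteq> D \<Longrightarrow> G x L = G x L'"
proof (induction L arbitrary: L' x)
  case Nil then show ?case by simp
next
  case (Cons p L0)
  have "p \<in> set L'" using Cons.prems by (metis list.set_intros(1) mset_eq_setD)
  then obtain A B where L': "L' = A @ p # B" by (meson split_list)
  have m: "mset L0 = mset (A @ B)" using Cons.prems L' by simp
  have sL: "set L' \<subseteq> D" using Cons.prems by (metis mset_eq_setD)
  have "G x (p # L0) = G x (p # A @ B)" using Cons m by (intro cong) auto
  also have "\<dots> = G x L'" unfolding L' using sL L' by (intro G_move[symmetric, of D G, OF swap cong]) auto
  finally show ?case .
qed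

lemma G_odd:
  assumes swap: "\<And>x p q L. p \<in> D \<Longrightarrow> q \<in> D \<Longrightarrow> G x (p#q#L) = G x (q#p#L)"
    and cong: "\<And>x a M N. (\<And>y. G y M = G y N) \<Longrightarrow> G x (a#M) = G x (a#N)"
    and cancel: "\<And>x p L. p \<in> D \<Longrightarrow> G x (p#p#L) = G x L"
  shows "set L \<subseteq> D \<Longrightarrow> distinct L' \<Longrightarrow> set L' = {p. odd (count (mset L) p)} \<Longrightarrow> G x L = G x L'"
proof (induction L arbitrary: x rule: length_induct)
  case (1 L)
  show ?case
  proof (cases "distinct L")
    case True
    then have cnt: "\<forall>a. count (mset L) a = (if a \<in> set L then 1 else 0)"
      using distinct_count_atmost_1[of L] by blast
    have "set L' = set L"
    proof (rule set_eqI)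
      fix a show "a \<in> set L' \<longleftrightarrow> a \<in> set L" using 1(4) cnt[rule_format, of a] by auto
    qed
    then have "mset L = mset L'" using True 1(3) by (simp add: set_eq_iff_mset_eq_distinct)
    then show ?thesis using 1(2) using G_perm[of D G, OF swap cong] by blast
  next
    case False
    then have "\<not> (\<forall>a. count (mset L) a = (if a \<in> set L then 1 else 0))"
      using distinct_count_atmost_1[of L] by blast
    then obtain p where p: "count (mset L) p \<noteq> (if p \<in> set L then 1 else 0)"
      by blast
    have pin: "p \<in> set L"
    proof (rule ccontr)
      assume "p \<notin> set L"
      then have "count (mset L) p = 0" by (simp add: count_eq_zero_iff)
      then show False using p \<open>p \<notin> set L\<close> by simp
    qed
    have c0: "0 < count (mset L) p" using pin by simp
    have c1: "count (mset L) p \<noteq> 1" using p pin by simp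
    have pc: "count (mset L) p \<ge> 2" "p \<in> set L" using c0 c1 pin by linarith+
    define L2 where "L2 = remove1 p (remove1 p L)"
    have mL2: "mset L2 = mset L - {#p#} - {#p#}" by (simp add: L2_def)
    have m: "mset L = mset (p # p # L2)"
    proof (subst multiset_eq_iff, rule allI)
      fix q show "count (mset L) q = count (mset (p # p # L2)) q"
        using pc(1) unfolding list.map mset.simps mL2 by (cases "q = p") auto
    qed
    have len: "length L2 < length L" using mset_eq_length[OF m] by simp
    have s2: "set L2 \<subseteq> set L" using m by (metis mset_eq_setD set_subset_Cons subset_trans)
    have "G x L = G x (p # p # L2)" using m 1(2) using G_perm[of D G, OF swap cong] by blast
    also have "\<dots> = G x L2" using pc 1(2) by (intro cancel) auto
    also have "\<dots> = G x L'"
    proof -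
      have "set L' = {p. odd (count (mset L2) p)}" using 1(4) m by auto
      then show ?thesis using 1(1) len s2 1(2,3) by blast
    qed
    finally show ?thesis .
  qed
qed


definition Phi :: "('f \<Rightarrow> nat \<Rightarrow> 'e) \<Rightarrow> 'e set \<Rightarrow> 'f list \<Rightarrow> complex" where
  "Phi lab x L = (\<Prod>k<length L. bphase lab (L!k) (cfg_xor x (cfg_sum (map (plaq_cfg lab) (take k L)))))"

lemma Phi_Nil[simp]: "Phi lab x [] = 1" by (simp add: Phi_def)
lemma Phi_Cons: "Phi lab x (p#L) = bphase lab p x * Phi lab (cfg_xor x (plaq_cfg lab p)) L"
  by (simp add: Phi_def prod.lessThan_Suc_shift xor_assoc del: prod.lessThan_Suc)

lemma Phi_append: "Phi lab x (M @ L) = Phi lab x M * Phi lab (cfg_xor x (cfg_sum (map (plaq_cfg lab) M))) L"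
  by (induction M arbitrary: x) (simp_all add: Phi_Cons xor_assoc)

lemma theta_Phi: "theta lab P x L = Phi lab (cfg_xor x (path_cfg P)) L / Phi lab x L"
  by (simp add: theta_def Phi_def prod_dividef)

lemma norm_bphase: "cmod (bphase lab p x) = 1"
  by (simp add: bphase_def Let_def norm_mult prod_norm[symmetric] norm_power norm_power_int)

lemma norm_Phi: "cmod (Phi lab x L) = 1"
  by (simp add: Phi_def prod_norm[symmetric] norm_bphase)

lemma Phi_nz: "Phi lab x L \<noteq> 0"
  using norm_Phi[of lab x L] by auto

lemma Phi_odd:
  assumes pc: "plaquettes_commute_square Pl lab"
  shows "set L \<subseteq> Pl \<Longrightarrow> distinct L' \<Longrightarrow> set L' = {p. odd (count (mset L) p)} \<Longrightarrow> Phi lab x L = Phi lab x L'"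
proof (rule G_odd[of Pl "Phi lab"])
  fix x p q L assume "p \<in> Pl" "q \<in> Pl"
  then have c: "bphase lab p (cfg_xor x (plaq_cfg lab q)) * bphase lab q x =
       bphase lab q (cfg_xor x (plaq_cfg lab p)) * bphase lab p x" using pc
    unfolding plaquettes_commute_square_def by blast
  show "Phi lab x (p # q # L) = Phi lab x (q # p # L)"
    using c by (simp add: Phi_Cons xor_swap[of x "plaq_cfg lab p"] mult_ac)
next
  fix x a M N assume "\<And>y. Phi lab y M = Phi lab y N"
  then show "Phi lab x (a # M) = Phi lab x (a # N)" by (simp add: Phi_Cons)
next
  fix x p L assume "p \<in> Pl"
  then have c: "bphase lab p (cfg_xor x (plaq_cfg lab p)) * bphase lab p x = 1" using pc
    unfolding plaquettes_commute_square_def by blast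
  show "Phi lab x (p # p # L) = Phi lab x L"
    using c by (simp add: Phi_Cons mult_ac)
qed

lemma sum_odd:
  "distinct L' \<Longrightarrow> set L' = {p. odd (count (mset L) p)} \<Longrightarrow> cfg_sum (map g L) = cfg_sum (map g L')"
  by (rule G_odd[of UNIV "\<lambda>x L. cfg_sum (map g L)"]) (auto simp: set_eq_iff)



definition nmb :: "(nat \<Rightarrow> bool) \<Rightarrow> nat \<Rightarrow> int" where "nmb u k = (if u k then 1 else 0)"
definition SGt :: "nat \<Rightarrow> (nat \<Rightarrow> bool) \<Rightarrow> complex" where
  "SGt j u = (-1) ^ nat (nmb u (prv j) * (1 - nmb u j))"
definition T12 :: "(nat \<Rightarrow> bool) \<Rightarrow> complex" where
  "T12 u = \<i> powi (nmb u 12 * (nmb u 1 * nmb u 6 - (1 - nmb u 1) * (1 - nmb u 6)))"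
definition T7 :: "(nat \<Rightarrow> bool) \<Rightarrow> complex" where
  "T7 u = \<i> powi (nmb u 7 * ((1 - nmb u 1) * (1 - nmb u 2) - nmb u 1 * nmb u 2))"
definition T8 :: "(nat \<Rightarrow> bool) \<Rightarrow> complex" where
  "T8 u = \<i> powi ((1 - nmb u 8) * (nmb u 2 * (1 - nmb u 3) - (1 - nmb u 2) * nmb u 3))"
definition T9 :: "(nat \<Rightarrow> bool) \<Rightarrow> complex" where
  "T9 u = \<i> powi (nmb u 9 * (nmb u 3 * nmb u 4 - (1 - nmb u 3) * (1 - nmb u 4)))"
definition T10 :: "(nat \<Rightarrow> bool) \<Rightarrow> complex" where
  "T10 u = \<i> powi (nmb u 10 * ((1 - nmb u 4) * (1 - nmb u 5) - nmb u 4 * nmb u 5))"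
definition T11 :: "(nat \<Rightarrow> bool) \<Rightarrow> complex" where
  "T11 u = \<i> powi ((1 - nmb u 11) * (nmb u 5 * (1 - nmb u 6) - (1 - nmb u 5) * nmb u 6))"
definition Bf :: "(nat \<Rightarrow> bool) \<Rightarrow> complex" where
  "Bf u = (\<Prod>j\<in>{1..6::nat}. SGt j u) * T12 u * T7 u * T8 u * T9 u * T10 u * T11 u"

lemma bphase_Bf: "bphase lab p x = Bf (\<lambda>k. lab p k \<in> x)"
  by (simp add: bphase_def Let_def Bf_def SGt_def T12_def T7_def T8_def T9_def T10_def T11_def nmb_def)

lemma Bf_ratio: "Bf u / Bf v = (\<Prod>j\<in>{1..6::nat}. SGt j u / SGt j v) * (T12 u / T12 v) * (T7 u / T7 v)
   * (T8 u / T8 v) * (T9 u / T9 v) * (T10 u / T10 v) * (T11 u / T11 v)"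
  by (simp add: Bf_def prod_dividef times_divide_times_eq)

lemma loc_term:
  fixes g :: "(nat \<Rightarrow> bool) \<Rightarrow> complex"
  assumes dep: "\<And>u v. (\<forall>k\<in>K. u k = v k) \<Longrightarrow> g u = g v"
    and nz: "\<And>u. g u \<noteq> 0"
    and near: "(\<exists>k\<in>K. lab p k \<in> A) \<Longrightarrow> (\<forall>k\<in>K. lab p k \<in> C)"
    and w: "w \<inter> C = {}"
  shows "g (\<lambda>k. lab p k \<in> cfg_xor (cfg_xor z w) A) / g (\<lambda>k. lab p k \<in> cfg_xor z w)
       = g (\<lambda>k. lab p k \<in> cfg_xor z A) / g (\<lambda>k. lab p k \<in> z)"
proof (cases "\<exists>k\<in>K. lab p k \<in> A")
  case True
  then have nw: "\<forall>k\<in>K. lab p k \<notin> w" using near w by blast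
  have e1: "g (\<lambda>k. lab p k \<in> cfg_xor (cfg_xor z w) A) = g (\<lambda>k. lab p k \<in> cfg_xor z A)"
    using nw by (intro dep) auto
  have e2: "g (\<lambda>k. lab p k \<in> cfg_xor z w) = g (\<lambda>k. lab p k \<in> z)"
    using nw by (intro dep) auto
  show ?thesis using e1 e2 by simp
next
  case False
  have e1: "g (\<lambda>k. lab p k \<in> cfg_xor (cfg_xor z w) A) = g (\<lambda>k. lab p k \<in> cfg_xor z w)"
    using False by (intro dep) auto
  have e2: "g (\<lambda>k. lab p k \<in> cfg_xor z A) = g (\<lambda>k. lab p k \<in> z)"
    using False by (intro dep) auto
  show ?thesis using e1 e2 nz by simp
qed

lemma near_lemma:
  assumes "\<forall>k\<in>K. c \<in> ends (lab p k)" and "A \<subseteq> set P"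
  shows "(\<exists>k\<in>K. lab p k \<in> A) \<Longrightarrow> (\<forall>k\<in>K. lab p k \<in> Conn ends P)"
  using assms unfolding Conn_def by blast

lemma path_cfg_sub: "path_cfg P \<subseteq> set P"
proof
  fix x assume "x \<in> path_cfg P"
  then have "odd (count_list P x)" by (simp add: path_cfg_def)
  then have "count_list P x \<noteq> 0" by (rule contrapos_pn) simp
  then show "x \<in> set P" by (simp add: count_list_0_iff)
qed

lemma rho_local:
  assumes hc: "\<forall>k\<in>{1..6}. ends (lab p k) = {crn p (prv k), crn p k} \<and> crn p k \<in> ends (lab p (k + 6))"
    and w: "w \<inter> Conn ends P = {}"
  shows "bphase lab p (cfg_xor (cfg_xor z w) (path_cfg P)) / bphase lab p (cfg_xor z w)
       = bphase lab p (cfg_xor z (path_cfg P)) / bphase lab p z"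
proof -
  let ?A = "path_cfg P" and ?C = "Conn ends P"
  have A: "?A \<subseteq> set P" by (rule path_cfg_sub)
  have h: "\<And>k. k \<in> {1..6} \<Longrightarrow> ends (lab p k) = {crn p (prv k), crn p k}"
      "\<And>k. k \<in> {1..6} \<Longrightarrow> crn p k \<in> ends (lab p (k + 6))" using hc by auto
  have pv: "prv 1 = 6" "prv 2 = 1" "prv 3 = 2" "prv 4 = 3" "prv 5 = 4" "prv 6 = 5"
    by (simp_all add: prv_def)
  have pvr: "\<And>j. j \<in> {1..6} \<Longrightarrow> prv j \<in> {1..6}" by (auto simp: prv_def)
  note L = loc_term[where lab = lab and p = p and A = ?A and C = ?C and w = w and z = z]
  have nzp: "\<And>k. \<i> powi k \<noteq> 0" by simp
  have sg: "\<And>j. j \<in> {1..6} \<Longrightarrow>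
      SGt j (\<lambda>k. lab p k \<in> cfg_xor (cfg_xor z w) ?A) / SGt j (\<lambda>k. lab p k \<in> cfg_xor z w)
    = SGt j (\<lambda>k. lab p k \<in> cfg_xor z ?A) / SGt j (\<lambda>k. lab p k \<in> z)"
  proof -
    fix j :: nat assume j: "j \<in> {1..6}"
    show "?thesis j"
    proof (rule L[where K = "{prv j, j}" and g = "SGt j"])
      show "\<And>u v. \<forall>k\<in>{prv j, j}. u k = v k \<Longrightarrow> SGt j u = SGt j v" by (simp add: SGt_def nmb_def)
      show "\<And>u. SGt j u \<noteq> 0" by (simp add: SGt_def)
      show "w \<inter> ?C = {}" by (rule w)
      show "\<exists>k\<in>{prv j, j}. lab p k \<in> ?A \<Longrightarrow> \<forall>k\<in>{prv j, j}. lab p k \<in> ?C"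
        by (rule near_lemma[where c = "crn p (prv j)", OF _ A]) (use h(1)[OF j] h(1)[OF pvr[OF j]] in auto)
    qed
  qed
  have t12: "T12 (\<lambda>k. lab p k \<in> cfg_xor (cfg_xor z w) ?A) / T12 (\<lambda>k. lab p k \<in> cfg_xor z w)
    = T12 (\<lambda>k. lab p k \<in> cfg_xor z ?A) / T12 (\<lambda>k. lab p k \<in> z)"
  proof (rule L[where K = "{12, 1, 6}"])
    show "\<And>u v. \<forall>k\<in>{12, 1, 6}. u k = v k \<Longrightarrow> T12 u = T12 v" by (simp add: T12_def nmb_def)
    show "\<And>u. T12 u \<noteq> 0" by (simp add: T12_def)
    show "w \<inter> ?C = {}" by (rule w)
    show "\<exists>k\<in>{12, 1, 6}. lab p k \<in> ?A \<Longrightarrow> \<forall>k\<in>{12, 1, 6}. lab p k \<in> ?C"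
      by (rule near_lemma[where c = "crn p 6", OF _ A]) (use h[of 6] h[of 1] pv in auto)
  qed
  have t7: "T7 (\<lambda>k. lab p k \<in> cfg_xor (cfg_xor z w) ?A) / T7 (\<lambda>k. lab p k \<in> cfg_xor z w)
    = T7 (\<lambda>k. lab p k \<in> cfg_xor z ?A) / T7 (\<lambda>k. lab p k \<in> z)"
  proof (rule L[where K = "{7, 1, 2}"])
    show "\<And>u v. \<forall>k\<in>{7, 1, 2}. u k = v k \<Longrightarrow> T7 u = T7 v" by (simp add: T7_def nmb_def)
    show "\<And>u. T7 u \<noteq> 0" by (simp add: T7_def)
    show "w \<inter> ?C = {}" by (rule w)
    show "\<exists>k\<in>{7, 1, 2}. lab p k \<in> ?A \<Longrightarrow> \<forall>k\<in>{7, 1, 2}. lab p k \<in> ?C"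
      by (rule near_lemma[where c = "crn p 1", OF _ A]) (use h[of 1] h[of 2] pv in auto)
  qed
  have t8: "T8 (\<lambda>k. lab p k \<in> cfg_xor (cfg_xor z w) ?A) / T8 (\<lambda>k. lab p k \<in> cfg_xor z w)
    = T8 (\<lambda>k. lab p k \<in> cfg_xor z ?A) / T8 (\<lambda>k. lab p k \<in> z)"
  proof (rule L[where K = "{8, 2, 3}"])
    show "\<And>u v. \<forall>k\<in>{8, 2, 3}. u k = v k \<Longrightarrow> T8 u = T8 v" by (simp add: T8_def nmb_def)
    show "\<And>u. T8 u \<noteq> 0" by (simp add: T8_def)
    show "w \<inter> ?C = {}" by (rule w)
    show "\<exists>k\<in>{8, 2, 3}. lab p k \<in> ?A \<Longrightarrow> \<forall>k\<in>{8, 2, 3}. lab p k \<in> ?C"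
      by (rule near_lemma[where c = "crn p 2", OF _ A]) (use h[of 2] h[of 3] pv in auto)
  qed
  have t9: "T9 (\<lambda>k. lab p k \<in> cfg_xor (cfg_xor z w) ?A) / T9 (\<lambda>k. lab p k \<in> cfg_xor z w)
    = T9 (\<lambda>k. lab p k \<in> cfg_xor z ?A) / T9 (\<lambda>k. lab p k \<in> z)"
  proof (rule L[where K = "{9, 3, 4}"])
    show "\<And>u v. \<forall>k\<in>{9, 3, 4}. u k = v k \<Longrightarrow> T9 u = T9 v" by (simp add: T9_def nmb_def)
    show "\<And>u. T9 u \<noteq> 0" by (simp add: T9_def)
    show "w \<inter> ?C = {}" by (rule w)
    show "\<exists>k\<in>{9, 3, 4}. lab p k \<in> ?A \<Longrightarrow> \<forall>k\<in>{9, 3, 4}. lab p k \<in> ?C"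
      by (rule near_lemma[where c = "crn p 3", OF _ A]) (use h[of 3] h[of 4] pv in auto)
  qed
  have t10: "T10 (\<lambda>k. lab p k \<in> cfg_xor (cfg_xor z w) ?A) / T10 (\<lambda>k. lab p k \<in> cfg_xor z w)
    = T10 (\<lambda>k. lab p k \<in> cfg_xor z ?A) / T10 (\<lambda>k. lab p k \<in> z)"
  proof (rule L[where K = "{10, 4, 5}"])
    show "\<And>u v. \<forall>k\<in>{10, 4, 5}. u k = v k \<Longrightarrow> T10 u = T10 v" by (simp add: T10_def nmb_def)
    show "\<And>u. T10 u \<noteq> 0" by (simp add: T10_def)
    show "w \<inter> ?C = {}" by (rule w)
    show "\<exists>k\<in>{10, 4, 5}. lab p k \<in> ?A \<Longrightarrow> \<forall>k\<in>{10, 4, 5}. lab p k \<in> ?C"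
      by (rule near_lemma[where c = "crn p 4", OF _ A]) (use h[of 4] h[of 5] pv in auto)
  qed
  have t11: "T11 (\<lambda>k. lab p k \<in> cfg_xor (cfg_xor z w) ?A) / T11 (\<lambda>k. lab p k \<in> cfg_xor z w)
    = T11 (\<lambda>k. lab p k \<in> cfg_xor z ?A) / T11 (\<lambda>k. lab p k \<in> z)"
  proof (rule L[where K = "{11, 5, 6}"])
    show "\<And>u v. \<forall>k\<in>{11, 5, 6}. u k = v k \<Longrightarrow> T11 u = T11 v" by (simp add: T11_def nmb_def)
    show "\<And>u. T11 u \<noteq> 0" by (simp add: T11_def)
    show "w \<inter> ?C = {}" by (rule w)
    show "\<exists>k\<in>{11, 5, 6}. lab p k \<in> ?A \<Longrightarrow> \<forall>k\<in>{11, 5, 6}. lab p k \<in> ?C"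
      by (rule near_lemma[where c = "crn p 5", OF _ A]) (use h[of 5] h[of 6] pv in auto)
  qed
  have sgp: "(\<Prod>j\<in>{1..6::nat}. SGt j (\<lambda>k. lab p k \<in> cfg_xor (cfg_xor z w) ?A) / SGt j (\<lambda>k. lab p k \<in> cfg_xor z w))
     = (\<Prod>j\<in>{1..6::nat}. SGt j (\<lambda>k. lab p k \<in> cfg_xor z ?A) / SGt j (\<lambda>k. lab p k \<in> z))"
    by (rule prod.cong[OF refl]) (rule sg)
  show ?thesis
    unfolding bphase_Bf Bf_ratio sgp t12 t7 t8 t9 t10 t11 ..
qed



lemma theta_local:
  assumes hc: "\<forall>p\<in>set L. \<forall>k\<in>{1..6}. ends (lab p k) = {crn p (prv k), crn p k} \<and> crn p k \<in> ends (lab p (k + 6))"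
    and w: "w \<inter> Conn ends P = {}"
  shows "theta lab P (cfg_xor y w) L = theta lab P y L"
  unfolding theta_def
proof (rule prod.cong[OF refl])
  fix k assume k: "k \<in> {..<length L}"
  let ?S = "cfg_sum (map (plaq_cfg lab) (take k L))" and ?A = "path_cfg P"
  have e1: "cfg_xor (cfg_xor (cfg_xor y w) ?A) ?S = cfg_xor (cfg_xor (cfg_xor y ?S) w) ?A"
    by (auto simp: set_eq_iff)
  have e2: "cfg_xor (cfg_xor y w) ?S = cfg_xor (cfg_xor y ?S) w" by (auto simp: set_eq_iff)
  have e3: "cfg_xor (cfg_xor y ?A) ?S = cfg_xor (cfg_xor y ?S) ?A" by (auto simp: set_eq_iff)
  have "L ! k \<in> set L" using k by auto
  then show "bphase lab (L ! k) (cfg_xor (cfg_xor (cfg_xor y w) ?A) ?S) / bphase lab (L ! k) (cfg_xor (cfg_xor y w) ?S)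
    = bphase lab (L ! k) (cfg_xor (cfg_xor y ?A) ?S) / bphase lab (L ! k) (cfg_xor y ?S)"
    unfolding e1 e2 e3 using hc w by (intro rho_local[where crn = crn]) auto
qed

lemma restr_sub: "restr_sum ends lab P L \<subseteq> Conn ends P"
  by (induction L) (auto simp: restr_sum_def)

lemma restr_in: "e \<in> Conn ends P \<Longrightarrow> e \<in> restr_sum ends lab P L \<longleftrightarrow> e \<in> cfg_sum (map (plaq_cfg lab) L)"
  by (induction L) (auto simp: restr_sum_def)

lemma restr_out: "cfg_xor (restr_sum ends lab P L) (cfg_sum (map (plaq_cfg lab) L)) \<inter> Conn ends P = {}"
  using restr_in[of _ ends P lab L] by auto

lemma cnj_unit: "cmod a = 1 \<Longrightarrow> cnj a = 1 / a"
proof -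
  assume "cmod a = 1"
  then have "a * cnj a = 1" using complex_norm_square[of a] by simp
  moreover have "a \<noteq> 0" using \<open>cmod a = 1\<close> by auto
  ultimately show ?thesis by (simp add: field_simps)
qed



theorem lemma8:
  fixes ends :: "'e \<Rightarrow> 'v set" and Pl :: "'f set" and lab :: "'f \<Rightarrow> nat \<Rightarrow> 'e"
    and P :: "'e list" and rep :: "'e set \<Rightarrow> 'e set" and F :: "'e set \<Rightarrow> complex"
  assumes "honeycomb_surface ends Pl lab"
    and "plaquettes_commute_square Pl lab"
    and "is_path ends P"
    and "algorithm1 ends Pl lab P rep F"
    and "\<forall>x. x \<subseteq> Conn ends P \<longrightarrow> F (rep x) = cnj (F (cfg_xor (rep x) (path_cfg P)))"
  shows "\<forall>x. x \<subseteq> Conn ends P \<longrightarrow> F (cfg_xor x (path_cfg P)) = cnj (F x)"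
proof (intro allI impI)
  fix x assume xC: "x \<subseteq> Conn ends P"
  obtain crn :: "'f \<Rightarrow> nat \<Rightarrow> 'v" where hcP: "\<forall>p\<in>Pl. \<forall>k\<in>{1..6}. ends (lab p k) = {crn p (prv k), crn p k} \<and> crn p k \<in> ends (lab p (k + 6))"
    using assms(1) unfolding honeycomb_surface_def by blast
  let ?A = "path_cfg P" and ?C = "Conn ends P"
  let ?R = "restr_sum ends lab P" and ?S = "\<lambda>L. cfg_sum (map (plaq_cfg lab) L)"
  let ?B = "BP ends Pl lab P"
  have BPl: "?B \<subseteq> Pl" by (auto simp: BP_def)
  have AC: "?A \<subseteq> ?C" using path_cfg_sub[of P] by (auto simp: Conn_def)
  note alg = assms(4)[unfolded algorithm1_def, rule_format]
  define r where "r = rep x"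
  have "r \<in> config_class ends Pl lab P x" using alg[OF xC] r_def by blast
  then obtain ps where ps: "distinct ps" "set ps \<subseteq> ?B" "r = cfg_xor x (?R ps)"
    unfolding config_class_def by blast
  have xr: "x = cfg_xor r (?R ps)" using ps(3) by simp
  have rC: "r \<subseteq> ?C" using xC restr_sub[of ends lab P ps] ps(3) by auto
  define s where "s = cfg_xor r ?A"
  have sC: "s \<subseteq> ?C" using rC AC by (auto simp: s_def)
  define r' where "r' = rep s"
  have "r' \<in> config_class ends Pl lab P s" using alg[OF sC] r'_def by blast
  then obtain qs where qs: "distinct qs" "set qs \<subseteq> ?B" "r' = cfg_xor s (?R qs)"
    unfolding config_class_def by blast
  have sr': "s = cfg_xor r' (?R qs)" using qs(3) by simp
  obtain ts where ts: "distinct ts" "set ts = (set qs - set ps) \<union> (set ps - set qs)"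
    using finite_distinct_list[of "(set qs - set ps) \<union> (set ps - set qs)"] by auto
  have tsB: "set ts \<subseteq> ?B" using ts qs ps by auto
  have odd_eq: "set ts = {p. odd (count (mset (qs @ ps)) p)}"
  proof -
    have c1: "\<forall>a. count (mset qs) a = (if a \<in> set qs then 1 else 0)"
      using qs(1) distinct_count_atmost_1[of qs] by blast
    have c2: "\<forall>a. count (mset ps) a = (if a \<in> set ps then 1 else 0)"
      using ps(1) distinct_count_atmost_1[of ps] by blast
    show ?thesis unfolding ts(2) using c1 c2 by auto
  qed
  have Rts: "?R ts = cfg_xor (?R qs) (?R ps)"
  proof -
    have "?R (qs @ ps) = ?R ts" unfolding restr_sum_def
      by (rule sum_odd[OF ts(1) odd_eq])
    then show ?thesis by (simp add: restr_sum_def cfg_sum_append)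
  qed
  have x'eq: "cfg_xor x ?A = cfg_xor r' (?R ts)"
    unfolding Rts xr using sr' unfolding s_def by (auto simp: set_eq_iff)
  have Fx': "F (cfg_xor x ?A) = theta lab P r' ts * F r'"
    unfolding x'eq r'_def using alg[OF sC] ts(1) tsB by blast
  have Fs: "F s = theta lab P r' qs * F r'"
    using alg[OF sC] qs(1,2) sr' r'_def by metis
  have Fx: "F x = theta lab P r ps * F r"
    using alg[OF xC] ps(1,2) xr r_def by metis
  have Fr: "F r = cnj (F s)" using assms(5) xC r_def s_def by blast
  have qpPl: "set (qs @ ps) \<subseteq> Pl" "set ts \<subseteq> Pl" using qs ps tsB BPl by auto
  have th1: "theta lab P r' ts = theta lab P r' (qs @ ps)"
    unfolding theta_Phi
    using Phi_odd[OF assms(2) qpPl(1) ts(1) odd_eq] by metis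
  have th2: "theta lab P r' (qs @ ps) = theta lab P r' qs * theta lab P (cfg_xor r' (?S qs)) ps"
  proof -
    have e: "cfg_xor (cfg_xor r' ?A) (?S qs) = cfg_xor (cfg_xor r' (?S qs)) ?A" by (auto simp: set_eq_iff)
    show ?thesis unfolding theta_Phi Phi_append e by (simp add: times_divide_times_eq)
  qed
  have th3: "theta lab P (cfg_xor r' (?S qs)) ps = theta lab P s ps"
  proof -
    have e: "cfg_xor r' (?S qs) = cfg_xor s (cfg_xor (?R qs) (?S qs))" unfolding sr' by (auto simp: set_eq_iff)
    have hc: "\<forall>p\<in>set ps. \<forall>k\<in>{1..6}. ends (lab p k) = {crn p (prv k), crn p k} \<and> crn p k \<in> ends (lab p (k + 6))"
      using hcP ps(2) BPl by blast
    show ?thesis unfolding e by (rule theta_local[OF hc restr_out[of ends lab P qs]])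
  qed
  have th4: "theta lab P s ps = cnj (theta lab P r ps)"
  proof -
    have "theta lab P s ps = Phi lab r ps / Phi lab s ps" unfolding theta_Phi s_def by simp
    also have "\<dots> = cnj (Phi lab s ps / Phi lab r ps)"
      using cnj_unit[OF norm_Phi[of lab s ps]] cnj_unit[OF norm_Phi[of lab r ps]] Phi_nz[of lab s ps] Phi_nz[of lab r ps]
      by simp
    finally show ?thesis unfolding theta_Phi s_def .
  qed
  show "F (cfg_xor x ?A) = cnj (F x)"
    unfolding Fx' th1 th2 th3 th4 Fx Fr
    using Fs by (simp add: mult_ac)
qed


end
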